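(* Let $n\ge6$ be even, let $\varrho:G_n\to\mathcal L$ be a homomorphism and let $p,q\in\overline{\mathrm B}W$. Then $\mathrm{Area}_n(p,q;\varrho)=\mathrm{Area}_1(\varrho(w_1)q,\,p;\varrho)$.
   Context: Let $W$ be a 2-dimensional complex vector space with a hermitian form $\langle\cdot,\cdot\rangle$ of signature $(+,-)$. In $\mathbb{CP}W$ let $\mathrm BW$ be the negative points (the Poincaré disc, curvature $-1$, oriented by its complex structure), $\mathrm SW$ the isotropic points, $\overline{\mathrm B}W=\mathrm BW\cup\mathrm SW$; $\mathcal L=\mathrm{PU}(W)$ is the group of orientation-preserving isometries of $\mathrm BW$. Oriented triangle area: $\mathrm{Area}\,\Delta(p_1,p_2,p_3)=2\arg(-\langle p_1,p_2\rangle\langle p_2,p_3\rangle\langle p_3,p_1\rangle)$ ($\arg\in[-\pi,\pi]$) if no two vertices are equal isotropic points, $0$ otherwise. $\mathrm{Area}(p_1,\dots,p_m):=\sum_{k=1}^m\mathrm{Area}\,\Delta(c,p_k,p_{k+1})$ (indices mod $m$), independent of $c\in\overline{\mathrm B}W$. $H_n$ is the group generated by $r_1,\dots,r_n$ with relations $r_i^2=1$, $r_n\cdots r_1=1$, indices mod $n$; for even $n$, $G_n\le H_n$ is the index-2 subgroup of words of even length in the $r_i$. $S$ is the automorphism of $H_n$ with $Sr_i=r_{i+1}$ (it preserves $G_n$). Put $v_i:=r_i\cdots r_2r_1$ for $0\le i\le n-1$ ($v_0=1$); for $0\le i\le n-2$ put $w_i:=v_i$ if $i$ is even and $w_i:=v_ir_n$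 if $i$ is odd, and $w_{i+n-1}:=r_nw_ir_n$; indices of the $w_i$ are mod $2n-2$. All $w_i\in G_n$. For $x\in\overline{\mathrm B}W$ write $w_ix$ for $\varrho(w_i)x$. Define $\mathrm{Area}_n(p,q;\varrho):=\mathrm{Area}(w_0p,w_1q,w_2p,w_3q,\dots,w_{2n-4}p,w_{2n-3}q)$ (the $2n-2$ points $w_jx_j$, $x_j=p$ for even $j$, $x_j=q$ for odd $j$), and for $1\le i\le n$, $\mathrm{Area}_i(p,q;\varrho):=\mathrm{Area}_n(p,q;\varrho\circ S^i)$. *)

theory Defs
  imports "HOL-Analysis.Analysis"
begin

type_synonym cvec = "complex ^ 2"
type_synonym cmtx = "complex ^ 2 ^ 2"

definition herm :: "cvec \<Rightarrow> cvec \<Rightarrow> complex" where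
  "herm z w = z$1 * cnj (w$1) - z$2 * cnj (w$2)"

text \<open>Points of the closed ball (negative or isotropic points), given by
  nonzero representative vectors.\<close>
definition in_cball :: "cvec \<Rightarrow> bool" where
  "in_cball p \<longleftrightarrow> p \<noteq> 0 \<and> Re (herm p p) \<le> 0"

definition isotropic :: "cvec \<Rightarrow> bool" where
  "isotropic p \<longleftrightarrow> p \<noteq> 0 \<and> herm p p = 0"

text \<open>Equality of points of CP W.\<close>
definition proj_eq :: "cvec \<Rightarrow> cvec \<Rightarrow> bool" where
  "proj_eq p q \<longleftrightarrow> (\<exists>c. c \<noteq> 0 \<and> p = c *s q)"

definition tri_area :: "cvec \<Rightarrow> cvec \<Rightarrow> cvec \<Rightarrow> real" where
  "tri_area p1 p2 p3 =
     (if (isotropic p1 \<and> isotropic p2 \<and> proj_eq p1 p2) \<or>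
         (isotropic p2 \<and> isotropic p3 \<and> proj_eq p2 p3) \<or>
         (isotropic p3 \<and> isotropic p1 \<and> proj_eq p3 p1)
      then 0
      else 2 * Arg (- (herm p1 p2 * herm p2 p3 * herm p3 p1)))"

text \<open>Base point c (the centre of the disc); the polygon area does not depend on it.\<close>
definition cpt :: cvec where "cpt = vector [0, 1]"

definition poly_area :: "cvec list \<Rightarrow> real" where
  "poly_area ps = (\<Sum>k<length ps. tri_area cpt (ps ! k) (ps ! ((k + 1) mod length ps)))"

text \<open>Elements of U(W): matrices preserving the hermitian form.
  Elements of PU(W) are represented by such matrices up to scalars.\<close>
definition unitaryW :: "cmtx \<Rightarrow> bool" where
  "unitaryW A \<longleftrightarrow> (\<forall>z w. herm (A *v z) (A *v w) = herm z w)"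

definition mproj_eq :: "cmtx \<Rightarrow> cmtx \<Rightarrow> bool" where
  "mproj_eq A B \<longleftrightarrow> (\<exists>c::complex. c \<noteq> 0 \<and> A = (\<chi> i j. c * B$i$j))"

text \<open>Words in the generators r_1..r_n: the list [a1,...,ak] stands for r_a1 \<cdots> r_ak.\<close>
definition is_word :: "nat \<Rightarrow> nat list \<Rightarrow> bool" where
  "is_word n u \<longleftrightarrow> set u \<subseteq> {1..n}"

text \<open>Equality in H_n = <r_1..r_n | r_i^2 = 1, r_n \<cdots> r_1 = 1>.\<close>
inductive Heq :: "nat \<Rightarrow> nat list \<Rightarrow> nat list \<Rightarrow> bool" for n where
  Heq_refl: "Heq n u u"
| Heq_sym: "Heq n u v \<Longrightarrow> Heq n v u"
| Heq_trans: "Heq n u v \<Longrightarrow> Heq n v w \<Longrightarrow> Heq n u w"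
| Heq_sq: "i \<in> {1..n} \<Longrightarrow> Heq n (u @ v) (u @ [i, i] @ v)"
| Heq_rel: "Heq n (u @ v) (u @ rev [1..<n+1] @ v)"

text \<open>A homomorphism G_n \<rightarrow> PU(W), where G_n is the set of even-length words
  modulo Heq; rho is only relevant on even-length words.\<close>
definition is_hom_G :: "nat \<Rightarrow> (nat list \<Rightarrow> cmtx) \<Rightarrow> bool" where
  "is_hom_G n \<rho> \<longleftrightarrow>
     (\<forall>u. is_word n u \<and> even (length u) \<longrightarrow> unitaryW (\<rho> u)) \<and>
     mproj_eq (\<rho> []) (mat 1) \<and>
     (\<forall>u v. is_word n u \<and> even (length u) \<and> is_word n v \<and> even (length v) \<longrightarrow>
        mproj_eq (\<rho> (u @ v)) (\<rho> u ** \<rho> v)) \<and>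
     (\<forall>u v. is_word n u \<and> even (length u) \<and> is_word n v \<and> even (length v) \<and> Heq n u v \<longrightarrow>
        mproj_eq (\<rho> u) (\<rho> v))"

text \<open>The automorphism S: r_i \<mapsto> r_{i+1} (indices mod n, in 1..n); rho \<circ> S^i.\<close>
definition shiftgen :: "nat \<Rightarrow> nat \<Rightarrow> nat \<Rightarrow> nat" where
  "shiftgen n i j = ((j + n - 1 + i) mod n) + 1"

definition rho_S :: "nat \<Rightarrow> nat \<Rightarrow> (nat list \<Rightarrow> cmtx) \<Rightarrow> nat list \<Rightarrow> cmtx" where
  "rho_S n i \<rho> u = \<rho> (map (shiftgen n i) u)"

definition vw :: "nat \<Rightarrow> nat list" where
  "vw i = rev [1..<i+1]"   (* v_i = r_i \<cdots> r_2 r_1 *)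

definition ww0 :: "nat \<Rightarrow> nat \<Rightarrow> nat list" where
  "ww0 n i = (if even i then vw i else vw i @ [n])"   (* 0 \<le> i \<le> n-2 *)

definition ww :: "nat \<Rightarrow> nat \<Rightarrow> nat list" where
  "ww n j = (let i = j mod (2*n - 2) in
     if i < n - 1 then ww0 n i else [n] @ ww0 n (i - (n - 1)) @ [n])"

definition Area_n :: "nat \<Rightarrow> cvec \<Rightarrow> cvec \<Rightarrow> (nat list \<Rightarrow> cmtx) \<Rightarrow> real" where
  "Area_n n p q \<rho> =
     poly_area (map (\<lambda>j. \<rho> (ww n j) *v (if even j then p else q)) [0..<2*n - 2])"

definition Area_i :: "nat \<Rightarrow> nat \<Rightarrow> cvec \<Rightarrow> cvec \<Rightarrow> (nat list \<Rightarrow> cmtx) \<Rightarrow> real" where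
  "Area_i n i p q \<rho> = Area_n n p q (rho_S n i \<rho>)"

end

theory Submission
  imports Defs
begin


definition Zf :: "cvec \<Rightarrow> cvec \<Rightarrow> cvec \<Rightarrow> complex" where
  "Zf c a b = - (herm c a * herm a b * herm b c)"

lemma herm_swap: "herm b a = cnj (herm a b)"
  by (simp add: herm_def)

lemma herm_scaleL: "herm (k *s a) b = k * herm a b"
  by (simp add: herm_def algebra_simps)

lemma herm_scaleR: "herm a (k *s b) = cnj k * herm a b"
  by (simp add: herm_def algebra_simps)

lemma std_pos:
  fixes a1 a2 b1 b2 :: complex
  assumes "cmod a1 \<le> cmod a2" "cmod b1 \<le> cmod b2"
  shows "cnj a2 * b2 * (a2 * cnj b2 - a1 * cnj b1) = 0 \<or> Re (cnj a2 * b2 * (a2 * cnj b2 - a1 * cnj b1)) > 0"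
proof -
  define w where "w = cnj a2 * b2 * a1 * cnj b1"
  define X where "X = (cmod a2 * cmod b2)^2"
  have e: "cnj a2 * b2 * (a2 * cnj b2 - a1 * cnj b1) = of_real X - w"
  proof -
    have "of_real X = (a2 * cnj a2) * (b2 * cnj b2)"
      unfolding X_def power_mult_distrib of_real_mult complex_norm_square by simp
    then show ?thesis unfolding w_def by (simp add: algebra_simps)
  qed
  have cw: "cmod w = cmod a2 * cmod b2 * cmod a1 * cmod b1"
    by (simp add: w_def norm_mult)
  have "cmod w \<le> X"
  proof -
    have "cmod a1 * cmod b1 \<le> cmod a2 * cmod b2"
      by (rule mult_mono) (use assms in auto)
    then have "cmod a2 * cmod b2 * (cmod a1 * cmod b1) \<le> cmod a2 * cmod b2 * (cmod a2 * cmod b2)"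
      by (rule mult_left_mono) simp
    then show ?thesis by (simp add: cw X_def power2_eq_square mult_ac)
  qed
  moreover have "Re w \<le> cmod w" by (rule complex_Re_le_cmod)
  ultimately have ge: "Re w \<le> X" by linarith
  show ?thesis
  proof (cases "Re w = X")
    case True
    then have "cmod w = Re w" using \<open>cmod w \<le> X\<close> \<open>Re w \<le> cmod w\<close> by linarith
    then have "(Re w)^2 + (Im w)^2 = (Re w)^2" using cmod_power2[of w] by simp
    then have "Im w = 0" by simp
    then have "w = of_real X" using True by (simp add: complex_eq_iff)
    then show ?thesis using e by simp
  next
    case False
    then show ?thesis using e ge by simp
  qed
qed

lemma parseval:
  fixes a b c :: cvec
  shows "(c$2*cnj(c$2) - c$1*cnj(c$1)) * herm a b =
     (a$1 * c$2 - a$2 * c$1) * cnj (b$1 * c$2 - b$2 * c$1) - herm a c * cnj (herm b c)"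
  by (simp add: herm_def algebra_simps)

definition negpt :: "cvec \<Rightarrow> bool" where "negpt c \<longleftrightarrow> Re (herm c c) < 0"

lemma herm_self_real: "herm a a = of_real (Re (herm a a))"
  by (simp add: herm_def complex_eq_iff)

lemma Zf_pos:
  assumes c: "negpt c" and a: "Re (herm a a) \<le> 0" and b: "Re (herm b b) \<le> 0"
  shows "Zf c a b = 0 \<or> Re (Zf c a b) > 0"
proof -
  define M where "M = c$2*cnj(c$2) - c$1*cnj(c$1)"
  have M: "M = - herm c c" by (simp add: M_def herm_def)
  define m where "m = - Re (herm c c)"
  have m: "m > 0" using c by (simp add: negpt_def m_def)
  have Mm: "M = of_real m" unfolding M m_def by (subst herm_self_real) simp
  define u where "u = (\<lambda>x::cvec. x$1 * c$2 - x$2 * c$1)"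
  define v where "v = (\<lambda>x. herm x c)"
  have P: "\<And>x y. M * herm x y = u x * cnj (u y) - v x * cnj (v y)"
    unfolding M_def u_def v_def by (rule parseval)
  have le: "cmod (u x) \<le> cmod (v x)" if "Re (herm x x) \<le> 0" for x
  proof -
    have "M * herm x x = of_real ((cmod (u x))^2 - (cmod (v x))^2)"
      unfolding of_real_diff complex_norm_square using P[of x x] by simp
    then have "Re (M * herm x x) = (cmod (u x))^2 - (cmod (v x))^2"
      by (metis Re_complex_of_real)
    moreover have "Re (M * herm x x) = m * Re (herm x x)" unfolding Mm by simp
    ultimately have "m * Re (herm x x) = (cmod (u x))^2 - (cmod (v x))^2" by simp
    moreover have "m * Re (herm x x) \<le> 0" using m that by (simp add: mult_nonneg_nonpos)
    ultimately have "(cmod (u x))^2 \<le> (cmod (v x))^2" by linarith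
    then show ?thesis by (simp add: power2_le_iff_abs_le)
  qed
  have key: "M * Zf c a b = cnj (v a) * v b * (v a * cnj (v b) - u a * cnj (u b))"
  proof -
    have "M * Zf c a b = - (herm c a * (M * herm a b) * herm b c)"
      by (simp add: Zf_def algebra_simps)
    also have "\<dots> = - (cnj (v a) * (u a * cnj (u b) - v a * cnj (v b)) * v b)"
      unfolding P by (simp add: v_def herm_swap[of c a])
    finally show ?thesis by (simp add: algebra_simps)
  qed
  have "M * Zf c a b = 0 \<or> Re (M * Zf c a b) > 0"
    unfolding key by (rule std_pos) (use le a b in auto)
  then show ?thesis using m unfolding Mm by (auto simp: zero_less_mult_iff)
qed

lemma cns: "k * cnj k = (of_real (cmod k))^2"
  by (metis complex_norm_square of_real_power)
lemma cns': "cnj k * k = (of_real (cmod k))^2"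
  by (metis cns mult.commute)

lemma negpt_cball: "negpt c \<Longrightarrow> in_cball c"
  by (auto simp: negpt_def in_cball_def herm_def)

lemma cball_le: "in_cball a \<Longrightarrow> Re (herm a a) \<le> 0"
  by (simp add: in_cball_def)

lemma herm_nz:
  assumes c: "negpt c" and a: "in_cball a"
  shows "herm c a \<noteq> 0"
proof
  assume h: "herm c a = 0"
  define M where "M = c$2*cnj(c$2) - c$1*cnj(c$1)"
  have Mne: "M \<noteq> 0"
  proof
    assume "M = 0"
    then have "herm c c = 0" by (simp add: M_def herm_def)
    then show False using c by (simp add: negpt_def)
  qed
  define u where "u = a$1 * c$2 - a$2 * c$1"
  have v: "herm a c = 0" using h herm_swap[of a c] by simp
  have "M * herm a a = u * cnj u - herm a c * cnj (herm a c)"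
    unfolding M_def u_def by (rule parseval)
  then have "M * herm a a = of_real ((cmod u)^2)" using v by (simp add: cns)
  moreover obtain m where m: "M = of_real m" "m > 0"
  proof -
    have "M = of_real (- Re (herm c c))" unfolding M_def
      by (simp add: herm_def complex_eq_iff)
    then show ?thesis using that c by (simp add: negpt_def)
  qed
  ultimately have "Re (M * herm a a) = (cmod u)^2"
    by (metis Re_complex_of_real)
  moreover have "Re (M * herm a a) = m * Re (herm a a)" using m by simp
  ultimately have "m * Re (herm a a) = (cmod u)^2" by simp
  moreover have "m * Re (herm a a) \<le> 0" using m a by (simp add: in_cball_def mult_nonneg_nonpos)
  ultimately have "u = 0" by simp
  have e1: "a$1 * M = cnj (c$2) * u - c$1 * herm a c"
    by (simp add: M_def u_def herm_def algebra_simps)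
  have e2: "a$2 * M = cnj (c$1) * u - c$2 * herm a c"
    by (simp add: M_def u_def herm_def algebra_simps)
  have "a$1 = 0" "a$2 = 0" using e1 e2 \<open>u = 0\<close> v Mne by auto
  then have "a = 0" by (simp add: vec_eq_iff forall_2)
  then show False using a by (simp add: in_cball_def)
qed


lemma Zf_nz:
  assumes "negpt c" "in_cball a" "in_cball b" "herm a b \<noteq> 0"
  shows "Zf c a b \<noteq> 0"
proof -
  have "herm c a \<noteq> 0" "herm c b \<noteq> 0" using herm_nz assms by auto
  then have "herm b c \<noteq> 0" using herm_swap[of b c] by auto
  then show ?thesis using assms \<open>herm c a \<noteq> 0\<close> by (simp add: Zf_def)
qed

lemma herm_zero_prop:
  assumes a: "in_cball a" and b: "in_cball b" and h: "herm a b = 0"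
  shows "\<exists>k. k \<noteq> 0 \<and> a = k *s b"
proof -
  have la: "cmod (a$1) \<le> cmod (a$2)" if "in_cball a" for a :: cvec
  proof -
    have "Re (herm a a) = (cmod (a$1))^2 - (cmod (a$2))^2"
      by (simp add: herm_def complex_mult_cnj cmod_power2)
    then show ?thesis using that by (simp add: in_cball_def power2_le_iff_abs_le)
  qed
  have nz2: "a$2 \<noteq> 0" if "in_cball a" for a :: cvec
  proof
    assume "a$2 = 0"
    then have "a$1 = 0" using la[OF that] by simp
    then have "a = 0" using \<open>a$2 = 0\<close> by (simp add: vec_eq_iff forall_2)
    then show False using that by (simp add: in_cball_def)
  qed
  have a2: "a$2 \<noteq> 0" and b2: "b$2 \<noteq> 0" using nz2 a b by auto
  have hab: "a$1 * cnj (b$1) = a$2 * cnj (b$2)" using h by (simp add: herm_def)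
  then have "cmod (a$1) * cmod (b$1) = cmod (a$2) * cmod (b$2)"
    by (metis complex_mod_cnj norm_mult)
  moreover have "cmod (b$1) \<le> cmod (b$2)" "cmod (a$1) \<le> cmod (a$2)" using la a b by auto
  moreover have "cmod (a$2) > 0" "cmod (b$2) > 0" using a2 b2 by auto
  ultimately have eqb: "cmod (b$1) = cmod (b$2)"
  proof -
    assume A: "cmod (a$1) * cmod (b$1) = cmod (a$2) * cmod (b$2)"
      "cmod (b$1) \<le> cmod (b$2)" "cmod (a$1) \<le> cmod (a$2)" "cmod (a$2) > 0" "cmod (b$2) > 0"
    have B: "cmod (a$1) * cmod (b$1) \<le> cmod (a$2) * cmod (b$1)"
      using A(3) by (rule mult_right_mono) simp
    show ?thesis
    proof (rule ccontr)
      assume "cmod (b$1) \<noteq> cmod (b$2)"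
      then have "cmod (b$1) < cmod (b$2)" using A(2) by simp
      then have "cmod (a$2) * cmod (b$1) < cmod (a$2) * cmod (b$2)"
        using A(4) by (rule mult_strict_left_mono)
      then show False using A(1) B by linarith
    qed
  qed
  have bb: "b$1 * cnj (b$1) = b$2 * cnj (b$2)"
    using eqb by (metis complex_norm_square)
  have key: "a$1 * b$2 = a$2 * b$1"
  proof -
    have "a$1 * (b$2 * cnj (b$2)) = a$1 * (b$1 * cnj (b$1))" using bb by simp
    also have "\<dots> = (a$1 * cnj (b$1)) * b$1" by (simp add: algebra_simps)
    also have "\<dots> = (a$2 * b$1) * cnj (b$2)" using hab by (simp add: algebra_simps)
    finally have "(a$1 * b$2) * cnj (b$2) = (a$2 * b$1) * cnj (b$2)" by (simp add: algebra_simps)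
    then show ?thesis using b2 by simp
  qed
  show ?thesis
  proof (intro exI conjI)
    show "a$2 / b$2 \<noteq> 0" using a2 b2 by simp
    show "a = (a$2 / b$2) *s b"
      using key b2 by (simp add: vec_eq_iff forall_2 field_simps)
  qed
qed

lemma Zf_scale1: "Zf c (k *s a) b = of_real ((cmod k)^2) * Zf c a b"
proof -
  have "Zf c (k *s a) b = (k * cnj k) * Zf c a b"
    by (simp add: Zf_def herm_scaleL herm_scaleR algebra_simps)
  then show ?thesis by (simp only: complex_norm_square)
qed

lemma Zf_scale2: "Zf c a (k *s b) = of_real ((cmod k)^2) * Zf c a b"
proof -
  have "Zf c a (k *s b) = (k * cnj k) * Zf c a b"
    by (simp add: Zf_def herm_scaleL herm_scaleR algebra_simps)
  then show ?thesis by (simp only: complex_norm_square)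
qed

lemma Arg_Zf_proj:
  assumes "proj_eq a a'" "proj_eq b b'"
  shows "Arg (Zf c a b) = Arg (Zf c a' b')"
proof -
  obtain k l where "k \<noteq> 0" "l \<noteq> 0" "a = k *s a'" "b = l *s b'"
    using assms by (auto simp: proj_eq_def)
  then have "Zf c a b = of_real ((cmod k)^2 * (cmod l)^2) * Zf c a' b'"
    by (simp only: Zf_scale1 Zf_scale2 of_real_mult mult_ac)
  then show ?thesis
    using \<open>k \<noteq> 0\<close> \<open>l \<noteq> 0\<close> by (simp only:) (intro Arg_times_of_real, simp)
qed

lemma Arg_small: "Zf c a b = 0 \<or> Re (Zf c a b) > 0 \<Longrightarrow> \<bar>Arg (Zf c a b)\<bar> < pi / 2"
  using Arg_Re_pos by blast

lemma base_change:
  assumes c: "negpt c" and c': "negpt c'" and a: "in_cball a" and b: "in_cball b"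
  shows "Arg (Zf c' a b) = Arg (Zf c a b) + Arg (Zf c c' a) - Arg (Zf c c' b)"
proof (cases "herm a b = 0")
  case True
  obtain k where k: "k \<noteq> 0" "a = k *s b" using herm_zero_prop[OF a b True] by blast
  have "Arg (Zf c c' a) = Arg (Zf c c' b)"
    unfolding k(2) Zf_scale2 using k(1) by (intro Arg_times_of_real) simp
  moreover have "Zf c' a b = 0" "Zf c a b = 0" using True by (simp_all add: Zf_def)
  ultimately show ?thesis by (simp add: Arg_zero)
next
  case False
  have cc': "in_cball c'" using c' by (rule negpt_cball)
  have n1: "Zf c' a b \<noteq> 0" using Zf_nz[OF c' a b False] .
  have n2: "Zf c a b \<noteq> 0" using Zf_nz[OF c a b False] .
  have n3: "Zf c c' a \<noteq> 0"
    using Zf_nz[OF c cc' a] herm_nz[OF c' a] by simp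
  have n4: "Zf c c' b \<noteq> 0"
    using Zf_nz[OF c cc' b] herm_nz[OF c' b] by simp
  have p1: "Re (Zf c' a b) > 0" using Zf_pos[OF c' cball_le[OF a] cball_le[OF b]] n1 by auto
  have p2: "Re (Zf c a b) > 0" using Zf_pos[OF c cball_le[OF a] cball_le[OF b]] n2 by auto
  have p3: "Re (Zf c c' a) > 0" using Zf_pos[OF c cball_le[OF cc'] cball_le[OF a]] n3 by auto
  have p4: "Re (Zf c c' b) > 0" using Zf_pos[OF c cball_le[OF cc'] cball_le[OF b]] n4 by auto
  define R where "R = (cmod (herm c a))^2 * (cmod (herm c b))^2 * (cmod (herm c c'))^2"
  define R2 where "R2 = (cmod (Zf c c' b))^2"
  have R: "R > 0" unfolding R_def using herm_nz[OF c a] herm_nz[OF c b] herm_nz[OF c cc'] by simp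
  have R2: "R2 > 0" unfolding R2_def using n4 by simp
  have eR: "of_real R = herm c a * herm a c * (herm c b * herm b c) * (herm c c' * herm c' c)"
    unfolding R_def of_real_mult complex_norm_square by (simp add: herm_swap[of _ c])
  have eR2: "of_real R2 = Zf c c' b * (- (herm c' c * herm b c' * herm c b))"
    unfolding R2_def complex_norm_square
    by (simp add: Zf_def herm_swap[of c' c] herm_swap[of b c'] herm_swap[of c b])
  have ident: "(Zf c' a b * Zf c c' b) * of_real R = (Zf c a b * Zf c c' a) * of_real R2"
    unfolding eR eR2 Zf_def by (simp add: mult_ac)
  have A1: "Arg (Zf c' a b * Zf c c' b) = Arg (Zf c' a b) + Arg (Zf c c' b)"
    by (rule Arg_times) (use Arg_small[of c' a b] Arg_small[of c c' b] p1 p4 n1 n4 in auto)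
  have A2: "Arg (Zf c a b * Zf c c' a) = Arg (Zf c a b) + Arg (Zf c c' a)"
    by (rule Arg_times) (use Arg_small[of c a b] Arg_small[of c c' a] p2 p3 n2 n3 in auto)
  have "Arg (Zf c' a b * Zf c c' b) = Arg (Zf c a b * Zf c c' a)"
    using arg_cong[OF ident, of Arg] R R2 by simp
  then show ?thesis using A1 A2 by simp
qed

lemma Arg_antisym:
  assumes c: "negpt c" and a: "in_cball a" and b: "in_cball b"
  shows "Arg (Zf c b a) = - Arg (Zf c a b)"
proof -
  have e: "Zf c b a = cnj (Zf c a b)"
    by (simp add: Zf_def herm_swap[of c a] herm_swap[of a b] herm_swap[of b c] mult_ac)
  have pos: "Zf c a b = 0 \<or> Re (Zf c a b) > 0" using Zf_pos[OF c cball_le[OF a] cball_le[OF b]] .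
  show ?thesis
  proof (cases "Zf c a b \<in> \<real>")
    case True
    then have "Arg (Zf c a b) = 0" using pos by (auto simp: Arg_eq_0 Arg_zero)
    then show ?thesis using True e by (simp add: Arg_cnj)
  next
    case False
    then show ?thesis using e by (simp add: Arg_cnj)
  qed
qed

lemma tri_area_Zf:
  assumes c: "negpt c" and a: "in_cball a" and b: "in_cball b"
  shows "tri_area c a b = 2 * Arg (Zf c a b)"
proof -
  have "\<not> isotropic c" using c by (auto simp: negpt_def isotropic_def)
  moreover have "Arg (Zf c a b) = 0" if iso: "isotropic a" "isotropic b" "proj_eq a b"
  proof -
    obtain k where "a = k *s b" using iso(3) unfolding proj_eq_def by blast
    then have "herm a b = 0" using \<open>isotropic b\<close> by (simp add: herm_scaleL isotropic_def)
    then show ?thesis by (simp add: Zf_def Arg_zero)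
  qed
  ultimately show ?thesis
  proof (cases "isotropic a \<and> isotropic b \<and> proj_eq a b")
    case True
    then have "tri_area c a b = 0" by (simp add: tri_area_def)
    then show ?thesis using True \<open>isotropic a \<Longrightarrow> isotropic b \<Longrightarrow> proj_eq a b \<Longrightarrow> Arg (Zf c a b) = 0\<close> by simp
  next
    case False
    then have "tri_area c a b = 2 * Arg (- (herm c a * herm a b * herm b c))"
    proof -
      have "\<not> ((isotropic c \<and> isotropic a \<and> proj_eq c a) \<or> (isotropic a \<and> isotropic b \<and> proj_eq a b)
               \<or> (isotropic b \<and> isotropic c \<and> proj_eq b c))"
        using False \<open>\<not> isotropic c\<close> by blast
      then show ?thesis unfolding tri_area_def by (simp only: if_False)
    qed
    then show ?thesis by (simp add: Zf_def)
  qed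
qed

lemma negpt_cpt: "negpt cpt"
  by (simp add: negpt_def cpt_def herm_def)




lemma herm_zero_left[simp]: "herm 0 y = 0" by (simp add: herm_def)

lemma mv_scale: "(A::cmtx) *v (k *s x) = k *s (A *v x)"
  by (simp add: vec_eq_iff matrix_vector_mult_def sum_distrib_left mult_ac)

lemma unit_ker: assumes "unitaryW T" "T *v x = 0" shows "x = 0"
proof -
  have h: "herm x y = 0" for y
    using assms unfolding unitaryW_def by (metis herm_zero_left)
  have "x$1 = 0" using h[of "vector [1,0]"] by (simp add: herm_def)
  moreover have "x$2 = 0" using h[of "vector [0,1]"] by (simp add: herm_def)
  ultimately show ?thesis by (simp add: vec_eq_iff forall_2)
qed

lemma unit_inj: assumes "unitaryW T" shows "inj ((*v) T)"
proof (rule injI)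
  fix x y assume "T *v x = T *v y"
  then have "T *v (x - y) = 0" by (simp add: matrix_vector_mult_diff_distrib)
  then show "x = y" using unit_ker[OF assms] by (metis eq_iff_diff_eq_0)
qed

lemma unit_surj: assumes "unitaryW T" shows "\<exists>c. T *v c = y"
proof -
  obtain B where "B ** T = mat 1" using unit_inj[OF assms] matrix_left_invertible_injective by blast
  then have "T ** B = mat 1" using matrix_left_right_inverse by blast
  then have "T *v (B *v y) = y" by (metis matrix_vector_mul_assoc matrix_vector_mul_lid)
  then show ?thesis by blast
qed

lemma unit_cball: assumes "unitaryW T" "in_cball x" shows "in_cball (T *v x)"
  using assms unit_ker[OF assms(1)] unfolding in_cball_def unitaryW_def by metis

lemma unit_Zf: "unitaryW T \<Longrightarrow> Zf (T *v c) (T *v a) (T *v b) = Zf c a b"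
  by (simp add: Zf_def unitaryW_def)

lemma iso_change:
  assumes "unitaryW T"
  obtains g where "\<And>a b. in_cball a \<Longrightarrow> in_cball b \<Longrightarrow>
     Arg (Zf cpt (T *v a) (T *v b)) = Arg (Zf cpt a b) + g a - g b"
proof -
  obtain c' where c': "T *v c' = cpt" using unit_surj[OF assms] by blast
  have n: "negpt c'" using negpt_cpt assms unfolding negpt_def unitaryW_def c'[symmetric] by metis
  show ?thesis
  proof (rule that[of "\<lambda>x. Arg (Zf cpt c' x)"])
    fix a b assume "in_cball a" "in_cball b"
    have "Zf cpt (T *v a) (T *v b) = Zf c' a b" using unit_Zf[OF assms] c' by metis
    then show "Arg (Zf cpt (T *v a) (T *v b)) = Arg (Zf cpt a b) + Arg (Zf cpt c' a) - Arg (Zf cpt c' b)"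
      using base_change[OF negpt_cpt n \<open>in_cball a\<close> \<open>in_cball b\<close>] by simp
  qed
qed

lemma proj_refl: "proj_eq a a"
  unfolding proj_eq_def by (intro exI[of _ 1]) simp

lemma proj_sym: "proj_eq a b \<Longrightarrow> proj_eq b a"
  unfolding proj_eq_def by (metis nonzero_imp_inverse_nonzero vector_smult_assoc
      left_inverse vector_smult_lid)

lemma proj_trans: "proj_eq a b \<Longrightarrow> proj_eq b c \<Longrightarrow> proj_eq a c"
  unfolding proj_eq_def by (metis mult_eq_0_iff vector_smult_assoc)

lemma proj_mat: "proj_eq a b \<Longrightarrow> proj_eq ((A::cmtx) *v a) (A *v b)"
  unfolding proj_eq_def by (metis mv_scale)

lemma mproj_apply: "mproj_eq A B \<Longrightarrow> proj_eq (A *v x) (B *v x)"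
proof -
  assume "mproj_eq A B"
  then obtain c where c: "c \<noteq> 0" "A = (\<chi> i j. c * B$i$j)" by (auto simp: mproj_eq_def)
  have "A *v x = c *s (B *v x)"
    unfolding c(2) by (simp add: vec_eq_iff matrix_vector_mult_def sum_distrib_left mult_ac)
  then show ?thesis using c(1) unfolding proj_eq_def by blast
qed

definition ew :: "nat \<Rightarrow> nat list \<Rightarrow> bool" where
  "ew n u \<longleftrightarrow> is_word n u \<and> even (length u)"

lemma ew_app: "ew n u \<Longrightarrow> ew n v \<Longrightarrow> ew n (u @ v)"
  by (auto simp: ew_def is_word_def)

lemma hom_app:
  assumes "is_hom_G n \<rho>" "ew n u" "ew n v"
  shows "proj_eq (\<rho> (u @ v) *v x) (\<rho> u *v (\<rho> v *v x))"
proof -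
  have "mproj_eq (\<rho> (u @ v)) (\<rho> u ** \<rho> v)" using assms by (auto simp: is_hom_G_def ew_def)
  then show ?thesis using mproj_apply by (metis matrix_vector_mul_assoc)
qed

lemma hom_heq:
  assumes "is_hom_G n \<rho>" "ew n u" "ew n v" "Heq n u v"
  shows "proj_eq (\<rho> u *v x) (\<rho> v *v x)"
proof -
  have "mproj_eq (\<rho> u) (\<rho> v)" using assms by (auto simp: is_hom_G_def ew_def)
  then show ?thesis using mproj_apply by blast
qed

lemma hom_nil:
  assumes "is_hom_G n \<rho>"
  shows "proj_eq (\<rho> [] *v x) x"
proof -
  have "mproj_eq (\<rho> []) (mat 1)" using assms by (auto simp: is_hom_G_def)
  then show ?thesis using mproj_apply by (metis matrix_vector_mul_lid)
qed

lemma hom_unit: "is_hom_G n \<rho> \<Longrightarrow> ew n u \<Longrightarrow> unitaryW (\<rho> u)"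
  by (auto simp: is_hom_G_def ew_def)

lemma hom_comb:
  assumes "is_hom_G n \<rho>" "ew n u" "ew n v" "ew n w" "Heq n (u @ v) w"
  shows "proj_eq (\<rho> u *v (\<rho> v *v x)) (\<rho> w *v x)"
  using proj_trans[OF proj_sym[OF hom_app[OF assms(1-3)]] hom_heq[OF assms(1) ew_app[OF assms(2,3)] assms(4,5)]] .

lemma Heq_ctx: "Heq n u v \<Longrightarrow> Heq n (a @ u @ b) (a @ v @ b)"
proof (induction rule: Heq.induct)
  case (Heq_refl u) show ?case by (rule Heq.Heq_refl)
next
  case (Heq_sym u v) then show ?case by (metis Heq.Heq_sym)
next
  case (Heq_trans u v w) then show ?case by (metis Heq.Heq_trans)
next
  case (Heq_sq i u v)
  then show ?case using Heq.Heq_sq[of i n "a @ u" "v @ b"] by simp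
next
  case (Heq_rel u v)
  then show ?case using Heq.Heq_rel[of n "a @ u" "v @ b"] by simp
qed

lemma Heq_cancel: "i \<in> {1..n} \<Longrightarrow> Heq n (u @ [i,i] @ v) (u @ v)"
  by (rule Heq_sym) (rule Heq_sq)

lemma vw_0[simp]: "vw 0 = []" by (simp add: vw_def)

lemma vw_Suc: "vw (Suc i) = Suc i # vw i"
  by (simp add: vw_def)

definition sw :: "nat \<Rightarrow> nat list" where "sw i = map Suc (vw i)"

lemma sw_0[simp]: "sw 0 = []" by (simp add: sw_def)
lemma sw_Suc: "sw (Suc i) = Suc (Suc i) # sw i" by (simp add: sw_def vw_Suc)

lemma vw_sw: "vw (Suc i) = sw i @ [1]"
  by (induction i) (simp_all add: vw_Suc sw_Suc)

lemma Heq_n_V: assumes "n \<ge> 1" shows "Heq n [n] (vw (n-1))"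
proof -
  have r: "rev [1..<n+1] = [n] @ vw (n-1)"
    using assms by (cases n) (auto simp: vw_def)
  have "Heq n ([n] @ []) ([n] @ rev [1..<n+1] @ [])" by (rule Heq_rel)
  then have 1: "Heq n [n] ([] @ [n,n] @ vw (n-1))" using r by simp
  have 2: "Heq n ([] @ [n,n] @ vw (n-1)) ([] @ vw (n-1))" by (rule Heq_cancel) (use assms in auto)
  show ?thesis using Heq_trans[OF 1 2] by simp
qed

lemma shift_lt: "0 < x \<Longrightarrow> x < n \<Longrightarrow> shiftgen n 1 x = Suc x"
proof -
  assume "0 < x" "x < n"
  then have "x + n - 1 + 1 = x + n" by simp
  then show ?thesis using \<open>x < n\<close> by (simp add: shiftgen_def)
qed

lemma shift_n: "0 < n \<Longrightarrow> shiftgen n 1 n = 1"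
  by (simp add: shiftgen_def)

lemma shift_lt': "0 < x \<Longrightarrow> x < n \<Longrightarrow> shiftgen n (Suc 0) x = Suc x"
  using shift_lt by simp

lemma map_s_vw: "i < n \<Longrightarrow> map (shiftgen n 1) (vw i) = sw i"
  by (induction i) (simp_all add: vw_Suc sw_Suc shift_lt')

lemma len_vw[simp]: "length (vw i) = i" by (simp add: vw_def)
lemma len_sw[simp]: "length (sw i) = i" by (simp add: sw_def)
lemma set_vw: "x \<in> set (vw i) \<Longrightarrow> 1 \<le> x \<and> x \<le> i"
  by (induction i) (auto simp: vw_Suc)
lemma set_sw: "x \<in> set (sw i) \<Longrightarrow> 2 \<le> x \<and> x \<le> i + 1"
  by (induction i) (auto simp: sw_Suc)

lemma isw_vw: "i \<le> n \<Longrightarrow> is_word n (vw i)" by (force simp: is_word_def dest: set_vw)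
lemma isw_sw: "i < n \<Longrightarrow> is_word n (sw i)" by (force simp: is_word_def dest: set_sw)




lemma ww_lo: "j < n - 1 \<Longrightarrow> ww n j = ww0 n j"
  by (simp add: ww_def Let_def)

lemma ww_hi: assumes "n \<ge> 2" "i < n - 1" shows "ww n (n - 1 + i) = [n] @ ww0 n i @ [n]"
proof -
  have "(n - 1 + i) mod (2*n-2) = n - 1 + i" using assms by simp
  moreover have "\<not> (n - 1 + i < n - 1)" by simp
  ultimately show ?thesis unfolding ww_def Let_def by (simp only: if_False) simp
qed

lemma ww_L: "n \<ge> 2 \<Longrightarrow> ww n (2*n-2) = []"
  by (simp add: ww_def Let_def ww0_def)

lemma ww0_even: "even i \<Longrightarrow> ww0 n i = vw i" by (simp add: ww0_def)
lemma ww0_odd: "odd i \<Longrightarrow> ww0 n i = vw i @ [n]" by (simp add: ww0_def)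

lemma ew0: "i < n \<Longrightarrow> ew n (ww0 n i)"
  by (cases "even i") (auto simp: ew_def ww0_def is_word_def dest: set_vw)

lemma ew_ww: assumes "n \<ge> 2" shows "ew n (ww n j)"
proof -
  define i where "i = j mod (2*n-2)"
  have i: "i < 2*n-2" using assms by (simp add: i_def)
  show ?thesis
  proof (cases "i < n - 1")
    case True
    then show ?thesis using ew0[of i n] by (simp add: ww_def Let_def i_def[symmetric])
  next
    case False
    have "ew n (ww0 n (i - (n-1)))" by (rule ew0) (use i in linarith)
    then have "ew n ([n] @ ww0 n (i - (n-1)) @ [n])" using assms by (auto simp: ew_def is_word_def)
    then show ?thesis using False by (simp add: ww_def Let_def i_def[symmetric])
  qed
qed

lemma ew_map_s: assumes "0 < n" "ew n u" shows "ew n (map (shiftgen n 1) u)"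
proof -
  have "shiftgen n 1 x \<in> {1..n}" for x
    using assms(1) by (simp add: shiftgen_def Suc_le_eq)
  then show ?thesis using assms(2) by (auto simp: ew_def is_word_def)
qed

lemma ew_nil[simp]: "ew n []" by (simp add: ew_def is_word_def)

lemma ww_1: "n \<ge> 3 \<Longrightarrow> ww n 1 = [1, n]"
  by (simp add: ww_lo ww0_odd vw_def)

locale LL =
  fixes n :: nat and \<rho> :: "nat list \<Rightarrow> cmtx" and p q :: cvec
  assumes n6: "n \<ge> 6" and ev: "even n" and hom: "is_hom_G n \<rho>"
    and p: "in_cball p" and q: "in_cball q"
begin

definition "T = \<rho> (ww n 1)"
definition "Pf j = \<rho> (ww n j) *v (if even j then p else q)"
definition "Qf j = \<rho> (map (shiftgen n 1) (ww n j)) *v (if even j then T *v q else p)"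

lemma T_def': "T = \<rho> [1, n]" using n6 ww_1[of n] by (simp add: T_def)

lemma T_unit: "unitaryW T"
  unfolding T_def by (rule hom_unit[OF hom ew_ww]) (use n6 in simp)

lemma Pf_cball: "in_cball (Pf j)"
  unfolding Pf_def using hom_unit[OF hom ew_ww[of n j]] n6 p q by (simp add: unit_cball)

lemma Qf_cball: "in_cball (Qf j)"
proof -
  have "unitaryW (\<rho> (map (shiftgen n 1) (ww n j)))"
    by (rule hom_unit[OF hom ew_map_s]) (use n6 ew_ww[of n j] in auto)
  moreover have "in_cball (T *v q)" using T_unit q by (simp add: unit_cball)
  ultimately show ?thesis unfolding Qf_def using p by (simp add: unit_cball)
qed

lemma TPf_cball: "in_cball (T *v Pf j)"
  using T_unit Pf_cball by (simp add: unit_cball)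

lemma Pf_L: "Pf (2*n-2) = Pf 0"
  using n6 by (simp add: Pf_def ww_L ww_lo ww0_def)

lemma ew1n: "ew n [1, n]" using n6 by (simp add: ew_def is_word_def)

end




lemma map_s_vw': "i < n \<Longrightarrow> map (shiftgen n (Suc 0)) (vw i) = sw i"
  using map_s_vw by simp
lemma shift_n': "0 < n \<Longrightarrow> shiftgen n (Suc 0) n = 1"
  using shift_n by simp

context LL begin

lemma n1: "n \<ge> 1" using n6 by simp
lemma nin: "n \<in> {1..n}" using n6 by simp
lemma onein: "(1::nat) \<in> {1..n}" using n6 by simp

lemma ew_sw: "k < n \<Longrightarrow> even k \<Longrightarrow> ew n (sw k)"
  by (simp add: ew_def isw_sw)

lemma is_word_app: "is_word n (u @ v) \<longleftrightarrow> is_word n u \<and> is_word n v"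
  by (auto simp: is_word_def)

lemma R1: assumes k: "k < n - 1" shows "proj_eq (Qf k) (Pf (Suc k))"
proof (cases "even k")
  case True
  have ms: "map (shiftgen n 1) (ww n k) = sw k"
    using k True by (simp add: ww_lo ww0_even map_s_vw')
  have Q: "Qf k = \<rho> (sw k) *v (\<rho> [1,n] *v q)" unfolding Qf_def ms T_def' using True by simp
  have P: "Pf (Suc k) = \<rho> (ww n (Suc k)) *v q" using True by (simp add: Pf_def)
  have H: "Heq n (sw k @ [1,n]) (ww n (Suc k))"
  proof (cases "Suc k < n - 1")
    case True
    then have "ww n (Suc k) = vw (Suc k) @ [n]" using \<open>even k\<close> by (simp add: ww_lo ww0_odd)
    then show ?thesis by (simp add: vw_sw Heq_refl)
  next
    case False
    then have sk: "Suc k = n - 1 + 0" using k by simp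
    have "ww n (Suc k) = [n, n]" unfolding sk using n6 by (subst ww_hi) (auto simp: ww0_def)
    moreover have "sw k @ [1, n] = vw (n - 1) @ [n]"
      using sk vw_sw[of k] by (metis add_0_right append_Cons append_Nil append_assoc)
    moreover have "Heq n (vw (n - 1) @ [n]) [n, n]"
      using Heq.Heq_sym[OF Heq_ctx[OF Heq_n_V[OF n1], of "[]" "[n]"]] by simp
    ultimately show ?thesis by (simp only:)
  qed
  have "proj_eq (\<rho> (sw k) *v (\<rho> [1,n] *v q)) (\<rho> (ww n (Suc k)) *v q)"
    by (rule hom_comb[OF hom ew_sw ew1n ew_ww H]) (use k True n6 in auto)
  then show ?thesis using Q P by simp
next
  case False
  have sk: "Suc k < n - 1" using k False ev by presburger
  have ms: "map (shiftgen n 1) (ww n k) = vw (Suc k)"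
    using k False n6 by (simp add: ww_lo ww0_odd map_s_vw' shift_n' vw_sw)
  have "Qf k = \<rho> (vw (Suc k)) *v p" unfolding Qf_def ms using False by simp
  moreover have "Pf (Suc k) = \<rho> (vw (Suc k)) *v p" using False sk by (simp add: Pf_def ww_lo ww0_even)
  ultimately show ?thesis by (simp add: proj_refl)
qed

lemma ew_1sw1: "i < n \<Longrightarrow> even i \<Longrightarrow> ew n ([1] @ sw i @ [1])"
  using n6 by (auto simp: ew_def is_word_def dest: set_sw)

lemma ew_1vwn: "i \<le> n \<Longrightarrow> even i \<Longrightarrow> ew n ([1] @ vw i @ [n])"
  using n6 by (auto simp: ew_def is_word_def dest: set_vw)

lemma ew_1vw1: "i \<le> n \<Longrightarrow> even i \<Longrightarrow> ew n ([1] @ vw i @ [1])"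
  using n6 by (auto simp: ew_def is_word_def dest: set_vw)

lemma ew_1vw: "i \<le> n \<Longrightarrow> odd i \<Longrightarrow> ew n ([1] @ vw i)"
  using n6 by (auto simp: ew_def is_word_def dest: set_vw)

lemma R2: assumes i: "i < n - 1" shows "proj_eq (Qf (n - 1 + i)) (T *v Pf (Suc (n - 1 + i)))"
proof (cases "even i")
  case True
  have par: "odd (n - 1 + i)" using True ev n6 by presburger
  have ms: "map (shiftgen n 1) (ww n (n - 1 + i)) = [1] @ sw i @ [1]"
    using ww_hi[of n i] i True n6 by (simp add: ww0_even map_s_vw' shift_n')
  have Q: "Qf (n - 1 + i) = \<rho> ([1] @ sw i @ [1]) *v p" unfolding Qf_def ms using par by simp
  show ?thesis
  proof (cases "Suc i < n - 1")
    case True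
    have w: "ww n (Suc (n - 1 + i)) = [n] @ sw i @ [1] @ [n] @ [n]"
      using ww_hi[of n "Suc i"] True n6 \<open>even i\<close> by (simp add: ww0_odd vw_sw)
    have TP: "T *v Pf (Suc (n - 1 + i)) = \<rho> [1,n] *v (\<rho> ([n] @ sw i @ [1] @ [n] @ [n]) *v p)"
      unfolding Pf_def T_def' w using par by simp
    have H1: "Heq n ([1] @ [n,n] @ (sw i @ [1] @ [n,n])) ([1] @ (sw i @ [1] @ [n,n]))"
      by (rule Heq_cancel[OF nin])
    have H2: "Heq n (([1] @ sw i @ [1]) @ [n,n] @ []) (([1] @ sw i @ [1]) @ [])"
      by (rule Heq_cancel[OF nin])
    have H: "Heq n ([1,n] @ [n] @ sw i @ [1] @ [n] @ [n]) ([1] @ sw i @ [1])"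
      using Heq_trans[OF H1[simplified] H2[simplified]] by simp
    have ew2: "ew n ([n] @ sw i @ [1] @ [n] @ [n])"
      using ew_ww[of n "Suc (n - 1 + i)"] n6 w by simp
    have "proj_eq (T *v Pf (Suc (n - 1 + i))) (\<rho> ([1] @ sw i @ [1]) *v p)"
      unfolding TP by (rule hom_comb[OF hom ew1n ew2 ew_1sw1 H]) (use i \<open>even i\<close> in auto)
    then show ?thesis using Q by (simp add: proj_sym)
  next
    case False
    then have si: "Suc i = n - 1" using i by simp
    then have L: "Suc (n - 1 + i) = 2*n - 2" by simp
    have TP: "T *v Pf (Suc (n - 1 + i)) = \<rho> [1,n] *v (\<rho> [] *v p)"
      unfolding L Pf_L T_def' using n6 by (simp add: Pf_def ww_lo ww0_def)
    have A: "proj_eq (\<rho> [1,n] *v (\<rho> [] *v p)) (\<rho> [1,n] *v p)"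
      by (rule hom_comb[OF hom ew1n ew_nil ew1n]) (simp add: Heq_refl)
    have sv: "[1] @ sw i @ [1] = [1] @ vw (n - 1)" using si vw_sw[of i] by simp
    have H: "Heq n ([1] @ vw (n - 1)) [1, n]"
      using Heq.Heq_sym[OF Heq_ctx[OF Heq_n_V[OF n1], of "[1]" "[]"]] by simp
    have B: "proj_eq (\<rho> ([1] @ vw (n - 1)) *v p) (\<rho> [1,n] *v p)"
      by (rule hom_heq[OF hom ew_1vw ew1n H]) (use n6 ev in auto)
    show ?thesis unfolding Q TP sv using proj_trans[OF B proj_sym[OF A]] .
  qed
next
  case False
  have par: "even (n - 1 + i)" using False ev n6 by presburger
  have si: "Suc i < n - 1" using i False ev by presburger
  have ms: "map (shiftgen n 1) (ww n (n - 1 + i)) = [1] @ vw (Suc i) @ [1]"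
    using ww_hi[of n i] i False n6 by (simp add: ww0_odd map_s_vw' shift_n' vw_sw)
  have Q: "Qf (n - 1 + i) = \<rho> ([1] @ vw (Suc i) @ [1]) *v (\<rho> [1,n] *v q)"
    unfolding Qf_def ms T_def' using par by simp
  have w: "ww n (Suc (n - 1 + i)) = [n] @ vw (Suc i) @ [n]"
    using ww_hi[of n "Suc i"] si n6 False by (simp add: ww0_even)
  have TP: "T *v Pf (Suc (n - 1 + i)) = \<rho> [1,n] *v (\<rho> ([n] @ vw (Suc i) @ [n]) *v q)"
    unfolding Pf_def T_def' w using par by simp
  have H1: "Heq n (([1] @ vw (Suc i)) @ [1,1] @ [n]) (([1] @ vw (Suc i)) @ [n])"
    by (rule Heq_cancel[OF onein])
  have H2: "Heq n ([1] @ [n,n] @ (vw (Suc i) @ [n])) ([1] @ (vw (Suc i) @ [n]))"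
    by (rule Heq_cancel[OF nin])
  have ewn: "ew n ([n] @ vw (Suc i) @ [n])"
    using ew_ww[of n "Suc (n - 1 + i)"] n6 w by simp
  have A: "proj_eq (\<rho> ([1] @ vw (Suc i) @ [1]) *v (\<rho> [1,n] *v q)) (\<rho> ([1] @ vw (Suc i) @ [n]) *v q)"
    by (rule hom_comb[OF hom ew_1vw1 ew1n ew_1vwn]) (use H1 si False in auto)
  have B: "proj_eq (\<rho> [1,n] *v (\<rho> ([n] @ vw (Suc i) @ [n]) *v q)) (\<rho> ([1] @ vw (Suc i) @ [n]) *v q)"
    by (rule hom_comb[OF hom ew1n ewn ew_1vwn]) (use H2 si False in auto)
  show ?thesis unfolding Q TP using proj_trans[OF A proj_sym[OF B]] .
qed

lemma R3: "proj_eq (T *v Pf n) (Pf 0)"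
proof -
  have w: "ww n n = [n, 1, n, n]"
    using ww_hi[of n 1] n6 by (simp add: ww0_odd vw_def)
  have TP: "T *v Pf n = \<rho> [1,n] *v (\<rho> [n,1,n,n] *v p)"
    unfolding Pf_def T_def' w using ev by simp
  have P0: "Pf 0 = \<rho> [] *v p" using n6 by (simp add: Pf_def ww_lo ww0_def)
  have H1: "Heq n ([1] @ [n,n] @ [1,n,n]) ([1] @ [1,n,n])" by (rule Heq_cancel[OF nin])
  have H2: "Heq n ([] @ [1,1] @ [n,n]) ([] @ [n,n])" by (rule Heq_cancel[OF onein])
  have H3: "Heq n ([] @ [n,n] @ []) ([] @ [])" by (rule Heq_cancel[OF nin])
  have H: "Heq n ([1,n] @ [n,1,n,n]) []" using Heq_trans[OF Heq_trans[OF H1[simplified] H2[simplified]] H3[simplified]] by simp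
  have ew4: "ew n [n,1,n,n]" using n6 by (simp add: ew_def is_word_def)
  have "proj_eq (T *v Pf n) (\<rho> [] *v p)"
    unfolding TP by (rule hom_comb[OF hom ew1n ew4 ew_nil H])
  then show ?thesis using P0 by simp
qed

lemma R4: "proj_eq (T *v Pf (n - 1)) (Pf 1)"
proof -
  have w: "ww n (n - 1) = [n, n]"
    using ww_hi[of n 0] n6 by (simp add: ww0_def)
  have par: "odd (n - 1)" using ev n6 by presburger
  have TP: "T *v Pf (n - 1) = \<rho> [1,n] *v (\<rho> [n,n] *v q)"
    unfolding Pf_def T_def' w using par by simp
  have P1: "Pf 1 = \<rho> [1,n] *v q" using n6 ww_1[of n] by (simp add: Pf_def)
  have H: "Heq n ([1,n] @ [n,n] @ []) ([1,n] @ [])" by (rule Heq_cancel[OF nin])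
  have ew2: "ew n [n,n]" using n6 by (simp add: ew_def is_word_def)
  have "proj_eq (T *v Pf (n - 1)) (\<rho> [1,n] *v q)"
    unfolding TP by (rule hom_comb[OF hom ew1n ew2 ew1n]) (use H in simp)
  then show ?thesis using P1 by simp
qed

end




lemma tele:
  fixes G G' h :: "nat \<Rightarrow> real"
  assumes "\<And>k. a \<le> k \<Longrightarrow> k < b \<Longrightarrow> G' k = G k + h k - h (Suc k)" "a \<le> b"
  shows "(\<Sum>k\<in>{a..<b}. G' k) = (\<Sum>k\<in>{a..<b}. G k) + h a - h b"
proof -
  have "(\<Sum>k\<in>{a..<b}. G' k) = (\<Sum>k\<in>{a..<b}. G k - (h (Suc k) - h k))"
    by (rule sum.cong) (use assms(1) in auto)
  also have "\<dots> = (\<Sum>k\<in>{a..<b}. G k) - (\<Sum>k\<in>{a..<b}. h (Suc k) - h k)"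
    by (rule sum_subtractf)
  also have "(\<Sum>k\<in>{a..<b}. h (Suc k) - h k) = h b - h a"
    by (rule sum_Suc_diff') (rule assms(2))
  finally show ?thesis by simp
qed

lemma cyc:
  fixes G :: "nat \<Rightarrow> nat \<Rightarrow> real"
  shows "(\<Sum>k<Suc L. G k ((k+1) mod Suc L)) = (\<Sum>k\<in>{0..<L}. G k (Suc k)) + G L 0"
proof -
  have "(\<Sum>k<Suc L. G k ((k+1) mod Suc L)) = (\<Sum>k<L. G k ((k+1) mod Suc L)) + G L 0"
    by simp
  also have "(\<Sum>k<L. G k ((k+1) mod Suc L)) = (\<Sum>k\<in>{0..<L}. G k (Suc k))"
    by (simp add: atLeast0LessThan)
  finally show ?thesis .
qed

definition Fa :: "cvec \<Rightarrow> cvec \<Rightarrow> real" where "Fa a b = Arg (Zf cpt a b)"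

lemma poly_area_Fa:
  assumes "\<And>j. in_cball (f j)" "L > 0"
  shows "poly_area (map f [0..<L]) = 2 * (\<Sum>k<L. Fa (f k) (f ((k+1) mod L)))"
proof -
  have "poly_area (map f [0..<L]) = (\<Sum>k<L. tri_area cpt (f k) (f ((k+1) mod L)))"
    unfolding poly_area_def using assms(2) by (simp add: nth_map)
  also have "\<dots> = (\<Sum>k<L. 2 * Fa (f k) (f ((k+1) mod L)))"
    by (rule sum.cong) (simp_all add: tri_area_Zf[OF negpt_cpt assms(1) assms(1)] Fa_def)
  finally show ?thesis by (simp add: sum_distrib_left)
qed

lemma Fa_proj: "proj_eq a a' \<Longrightarrow> proj_eq b b' \<Longrightarrow> Fa a b = Fa a' b'"
  unfolding Fa_def by (rule Arg_Zf_proj)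

lemma Fa_anti: "in_cball a \<Longrightarrow> in_cball b \<Longrightarrow> Fa b a = - Fa a b"
  unfolding Fa_def by (rule Arg_antisym[OF negpt_cpt])

context LL begin

lemma R2': assumes "n - 1 \<le> k" "k < 2*n - 2" shows "proj_eq (Qf k) (T *v Pf (Suc k))"
proof -
  have "k = n - 1 + (k - (n - 1))" "k - (n - 1) < n - 1" using assms by auto
  then show ?thesis using R2[of "k - (n - 1)"] by metis
qed

definition "cs f a b = (\<Sum>k\<in>{a..<b}. Fa (f k) (f (Suc k)))"

lemma main: "poly_area (map Pf [0..<2*n-2]) = poly_area (map Qf [0..<2*n-2])"
proof -
  obtain g where g: "\<And>a b. in_cball a \<Longrightarrow> in_cball b \<Longrightarrow>
     Fa (T *v a) (T *v b) = Fa a b + g a - g b"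
    using iso_change[OF T_unit] unfolding Fa_def by metis
  define m where "m = n - 1"
  define L where "L = 2*n - 2"
  have m5: "m \<ge> 5" using n6 by (simp add: m_def)
  have Lm: "L = Suc (m + (m - 1))" using n6 by (simp add: L_def m_def)
  have nm: "n = Suc m" using n6 by (simp add: m_def)
  have PL: "Pf L = Pf 0" unfolding L_def by (rule Pf_L)
  have gP: "Fa (T *v Pf a) (T *v Pf b) = Fa (Pf a) (Pf b) + g (Pf a) - g (Pf b)" for a b
    using g Pf_cball by blast
  have SP: "poly_area (map Pf [0..<L]) = 2 * cs Pf 0 L"
  proof -
    have "poly_area (map Pf [0..<L]) = 2 * (\<Sum>k<L. Fa (Pf k) (Pf ((k+1) mod L)))"
      by (rule poly_area_Fa) (use Pf_cball Lm in auto)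
    also have "(\<Sum>k<L. Fa (Pf k) (Pf ((k+1) mod L))) = cs Pf 0 (L - 1) + Fa (Pf (L - 1)) (Pf 0)"
      unfolding cs_def using cyc[of "\<lambda>a b. Fa (Pf a) (Pf b)" "L - 1"] Lm by simp
    also have "\<dots> = cs Pf 0 L"
      unfolding cs_def using Lm PL by (simp add: sum.atLeastLessThan_Suc)
    finally show ?thesis .
  qed
  have SQ: "poly_area (map Qf [0..<L]) = 2 * (cs Qf 0 (L - 1) + Fa (Qf (L - 1)) (Qf 0))"
  proof -
    have "poly_area (map Qf [0..<L]) = 2 * (\<Sum>k<L. Fa (Qf k) (Qf ((k+1) mod L)))"
      by (rule poly_area_Fa) (use Qf_cball Lm in auto)
    also have "(\<Sum>k<L. Fa (Qf k) (Qf ((k+1) mod L))) = cs Qf 0 (L - 1) + Fa (Qf (L - 1)) (Qf 0)"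
      unfolding cs_def using cyc[of "\<lambda>a b. Fa (Qf a) (Qf b)" "L - 1"] Lm by simp
    finally show ?thesis .
  qed
  have QA: "cs Qf 0 (L - 1) = cs Qf 0 (m - 1) + Fa (Qf (m - 1)) (Qf m) + cs Qf m (L - 1)"
  proof -
    have "cs Qf 0 (L - 1) = cs Qf 0 (m - 1) + cs Qf (m - 1) (L - 1)"
      unfolding cs_def using Lm by (simp add: sum.atLeastLessThan_concat)
    moreover have "cs Qf (m - 1) (L - 1) = Fa (Qf (m - 1)) (Qf m) + cs Qf m (L - 1)"
      unfolding cs_def using Lm m5 by (subst sum.atLeast_Suc_lessThan) (auto simp: Suc_diff_1)
    ultimately show ?thesis by simp
  qed
  have QB: "cs Qf 0 (m - 1) = cs Pf 1 m"
  proof -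
    have "cs Pf 1 m = (\<Sum>k\<in>{0..<m - 1}. Fa (Pf (Suc k)) (Pf (Suc (Suc k))))"
      unfolding cs_def using m5 sum.shift_bounds_Suc_ivl[of "\<lambda>k. Fa (Pf k) (Pf (Suc k))" 0 "m - 1"]
      by (simp add: Suc_diff_1)
    also have "\<dots> = cs Qf 0 (m - 1)"
      unfolding cs_def
      by (rule sum.cong) (auto intro!: Fa_proj[symmetric] R1 simp: m_def)
    finally show ?thesis by simp
  qed
  have QC: "Fa (Qf (m - 1)) (Qf m) = Fa (Pf m) (Pf 0)"
  proof (rule Fa_proj)
    have e: "Suc (m - 1) = m" using m5 by simp
    have "m - 1 < n - 1" using m5 by (simp add: m_def)
    from R1[OF this] show "proj_eq (Qf (m - 1)) (Pf m)" unfolding e .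
    show "proj_eq (Qf m) (Pf 0)"
    proof -
      have "proj_eq (Qf (n - 1 + 0)) (T *v Pf (Suc (n - 1 + 0)))" by (rule R2) (use n6 in simp)
      moreover have "Suc (n - 1 + 0) = n" "n - 1 + 0 = m" using n6 by (simp_all add: m_def)
      ultimately show ?thesis using proj_trans[OF _ R3] by simp
    qed
  qed
  have QD: "cs Qf m (L - 1) = cs Pf (Suc m) L + g (Pf (Suc m)) - g (Pf L)"
  proof -
    have "cs Qf m (L - 1) = (\<Sum>k\<in>{m..<L - 1}. Fa (T *v Pf (Suc k)) (T *v Pf (Suc (Suc k))))"
      unfolding cs_def
      by (rule sum.cong) (auto intro!: Fa_proj R2' simp: m_def L_def)
    also have "\<dots> = (\<Sum>k\<in>{Suc m..<L}. Fa (T *v Pf k) (T *v Pf (Suc k)))"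
      using sum.shift_bounds_Suc_ivl[of "\<lambda>k. Fa (T *v Pf k) (T *v Pf (Suc k))" m "L - 1"] Lm
      by simp
    also have "\<dots> = cs Pf (Suc m) L + g (Pf (Suc m)) - g (Pf L)"
      unfolding cs_def by (rule tele) (use gP Lm in auto)
    finally show ?thesis .
  qed
  have QE: "Fa (Qf (L - 1)) (Qf 0) = Fa (Pf 0) (Pf m) + g (Pf 0) - g (Pf m)"
  proof -
    have "Fa (Qf (L - 1)) (Qf 0) = Fa (T *v Pf 0) (T *v Pf m)"
    proof (rule Fa_proj)
      show "proj_eq (Qf (L - 1)) (T *v Pf 0)"
      proof -
        have a: "n - 1 \<le> L - 1" "L - 1 < 2*n-2" using n6 by (simp_all add: L_def)
        have e: "Suc (L - 1) = L" using Lm by simp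
        from R2'[OF a] show ?thesis unfolding e PL .
      qed
      show "proj_eq (Qf 0) (T *v Pf m)"
      proof -
        have "proj_eq (Qf 0) (Pf (Suc 0))" by (rule R1) (use n6 in simp)
        then show ?thesis using proj_trans[OF _ proj_sym[OF R4]] by (simp add: m_def)
      qed
    qed
    then show ?thesis using gP by simp
  qed
  have QF: "Fa (Pf 1) (Pf 0) = Fa (Pf m) (Pf (Suc m)) + g (Pf m) - g (Pf (Suc m))"
  proof -
    have "Fa (Pf 1) (Pf 0) = Fa (T *v Pf m) (T *v Pf (Suc m))"
    proof (rule Fa_proj)
      show "proj_eq (Pf 1) (T *v Pf m)" unfolding m_def by (rule proj_sym[OF R4])
      show "proj_eq (Pf 0) (T *v Pf (Suc m))" unfolding nm[symmetric] by (rule proj_sym[OF R3])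
    qed
    then show ?thesis using gP by simp
  qed
  have PA: "cs Pf 0 L = Fa (Pf 0) (Pf 1) + cs Pf 1 m + Fa (Pf m) (Pf (Suc m)) + cs Pf (Suc m) L"
  proof -
    have "cs Pf 0 L = cs Pf 0 m + cs Pf m L"
      unfolding cs_def using Lm by (simp add: sum.atLeastLessThan_concat)
    moreover have "cs Pf 0 m = Fa (Pf 0) (Pf 1) + cs Pf 1 m"
      unfolding cs_def using m5 by (subst sum.atLeast_Suc_lessThan) auto
    moreover have "cs Pf m L = Fa (Pf m) (Pf (Suc m)) + cs Pf (Suc m) L"
      unfolding cs_def using Lm by (subst sum.atLeast_Suc_lessThan) auto
    ultimately show ?thesis by simp
  qed
  have an1: "Fa (Pf 1) (Pf 0) = - Fa (Pf 0) (Pf 1)" by (rule Fa_anti[OF Pf_cball Pf_cball])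
  have an2: "Fa (Pf m) (Pf 0) = - Fa (Pf 0) (Pf m)" by (rule Fa_anti[OF Pf_cball Pf_cball])
  have "cs Pf 0 L = cs Qf 0 (L - 1) + Fa (Qf (L - 1)) (Qf 0)"
    using QA QB QC QD QE QF PA an1 an2 PL by simp
  then show ?thesis using SP SQ by (simp add: L_def)
qed

end


theorem lemma5p5:
  fixes n :: nat and \<rho> :: "nat list \<Rightarrow> complex ^ 2 ^ 2" and p q :: "complex ^ 2"
  assumes "n \<ge> 6" and "even n"
    and "is_hom_G n \<rho>"
    and "in_cball p" and "in_cball q"
  shows "Area_n n p q \<rho> = Area_i n 1 (\<rho> (ww n 1) *v q) p \<rho>"
proof -
  interpret LL n \<rho> p q using assms by unfold_locales
  have 1: "Area_n n p q \<rho> = poly_area (map Pf [0..<2*n-2])"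
    unfolding Area_n_def Pf_def by simp
  have 2: "Area_i n 1 (\<rho> (ww n 1) *v q) p \<rho> = poly_area (map Qf [0..<2*n-2])"
    unfolding Area_i_def Area_n_def Qf_def rho_S_def T_def by simp
  show ?thesis unfolding 1 2 by (rule main)
qed

end
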